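(* Consider the blown-up Brusselator problem described in the context, with fixed $a,d_1,d_2>0$ and $n\ge1$. Let $A(\bar{\mathbf x},\bar t)\in\mathbb C$ be smooth, $\boldsymbol\varphi=(1,-1+ia^{-1})^\top$, $\boldsymbol\varphi^*=\tfrac12(1-ia,-ia)^\top$, and $$\boldsymbol\psi^{(0)}=A(\bar{\mathbf x},\bar t)\boldsymbol\varphi e^{iat}+\overline{A}\,\overline{\boldsymbol\varphi}e^{-iat}.$$ Let $\boldsymbol\psi^{(1)}$ be any $2\pi/a$-periodic-in-$t$ solution of $$(\partial_t-M)\boldsymbol\psi^{(1)}=\Big(\tfrac{1+a^2}{a}(\psi_1^{(0)})^2+2a\psi_1^{(0)}\psi_2^{(0)}\Big)\begin{pmatrix}1\\-1\end{pmatrix},\qquad M=\begin{pmatrix}a^2&a^2\\-(1+a^2)&-a^2\end{pmatrix},$$ and let $\mathbf B^{(2)}$ be the order-$r^2$ term of the blown-up equation, $$\mathbf B^{(2)}=-(\partial_{\bar t}+r^{-1}\partial_{\bar t}r)\boldsymbol\psi^{(0)}+\mathrm{diag}(d_1,d_2)\Delta_{\bar{\mathbf x}}\boldsymbol\psi^{(0)}+\Big((1+a^2)\bar\mu\psi_1^{(0)}+\tfrac{2(1+a^2)}{a}\psi_1^{(0)}\psi_1^{(1)}+2a(\psi_1^{(0)}\psi_2^{(1)}+\psi_1^{(1)}\psi_2^{(0)})+(\psi_1^{(0)})^2\psi_2^{(0)}\Big)\begin{pmatrix}1\\-1\end{pmatrix}.$$ Writing $\mathbf B^{(2)}=\sum_{k\in\mathbb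 Z}\mathbf B^{(2,k)}(\bar{\mathbf x},\bar t)e^{ikat}$, the solvability condition $\boldsymbol\varphi^*\cdot\mathbf B^{(2,1)}\equiv0$ holds if and only if $$\partial_{\bar t}A=c_1\Delta_{\bar{\mathbf x}}A+\big(c_2\bar\mu(\bar t)-r(\bar t)^{-1}\partial_{\bar t}r(\bar t)\big)A-c_3A|A|^2,$$ where $\Delta_{\bar{\mathbf x}}=\sum_{j=1}^n\partial_{\bar x_j}^2$ and $$c_1=\frac{d_1+d_2-ia(d_1-d_2)}{2},\quad c_2=\frac{1+a^2}{2},\quad c_3=\frac12\Big(\frac{2+a^2}{a^2}+i\,\frac{4-7a^2+4a^4}{3a^3}\Big).$$ Consequently, in charts (with $\beta=2$): $\mathcal K_1:\ \partial_{t_1}A_1=c_1\Delta_{\mathbf x_1}A_1+(-c_2+\tfrac{\varepsilon_1(t_1)}{2})A_1-c_3A_1|A_1|^2$; $\mathcal K_2:\ \partial_{t_2}A_2=c_1\Delta_{\mathbf x_2}A_2+c_2\mu_2(t_2)A_2-c_3A_2|A_2|^2$; $\mathcal K_3:\ \partial_{t_3}A_3=c_1\Delta_{\mathbf x_3}A_3+(c_2-\tfrac{\varepsilon_3(t_3)}{2})A_3-c_3A_3|A_3|^2$, with $\varepsilon_1(t_1)=\frac{2\varepsilon_1(0)}{2-4\varepsilon_1(0)t_1}$, $\mu_2(t_2)=\mu_2(0)+t_2$, $\varepsilon_3(t_3)=\frac{2\varepsilon_3(0)}{2+4\varepsilon_3(0)t_3}$.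
   Context: The dynamic Brusselator system, after translating its homogeneous steady state to the origin and setting $\mu=(b-b_c)/b_c$, $b_c=1+a^2$, is, for $\mathbf x\in\mathbb R^n$, $\partial_tu=d_1\Delta u+a^2u+a^2v+(1+a^2)u\mu+f$, $\partial_tv=d_2\Delta v-(1+a^2)u-a^2v-(1+a^2)u\mu-f-\varepsilon(1+a^2)/a$, $\dot\mu=\varepsilon$, where $f(u,v,\mu)=\frac{(1+a^2)(1+\mu)}{a}u^2+2auv+u^2v$. The blow-up (with $\beta=2$) is $(u,v)=r(\bar t)\boldsymbol\psi(t,\bar{\mathbf x},\bar t)$, $\mu=r^2\bar\mu$, $\varepsilon=r^4\bar\varepsilon$, $(\bar\mu,\bar\varepsilon)\in S^1$, with $\partial_{x_j}=r\partial_{\bar x_j}$ (the solution does not depend on the fast space variable) and $\partial_t\mapsto\partial_t+r^2\partial_{\bar t}$ (fast $t$ and slow $\bar t$ independent); $r(\bar t)>0$, $\bar\mu(\bar t)$ given, $r^{-1}\partial_{\bar t}r$ treated as order one. Expanding $\boldsymbol\psi=\sum_k\boldsymbol\psi^{(k)}r^k$ and matching powers of $r$ gives the order-$r^0$ equation $(\partial_t-M)\boldsymbol\psi^{(0)}=0$, the order-$r^1$ equation above, and $\mathbf B^{(2)}$ as the order-$r^2$ forcing. Charts: $\mathcal K_1$: $\bar\mu=-1$, $r=r_1$, $\varepsilon=r_1^4\varepsilon_1$, $\dot r_1=-\tfrac12r_1\varepsilon_1$, $\dot\varepsilon_1=2\varepsilon_1^2$; $\mathcal K_2$: $\bar\varepsilon=1$,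 $\mu=r_2^2\mu_2$, $\dot r_2=0$, $\dot\mu_2=1$; $\mathcal K_3$: $\bar\mu=1$, $\varepsilon=r_3^4\varepsilon_3$, $\dot r_3=\tfrac12r_3\varepsilon_3$, $\dot\varepsilon_3=-2\varepsilon_3^2$; $t_l,\mathbf x_l,A_l$ denote time, space and amplitude in chart $\mathcal K_l$, and $\Delta_{\mathbf x_l}$ the Laplacian in $\mathbf x_l$. *)

theory Defs
  imports "HOL-Analysis.Analysis"
begin

fun Ck :: "nat \<Rightarrow> ('a::real_normed_vector \<Rightarrow> 'b::real_normed_vector) \<Rightarrow> 'a set \<Rightarrow> bool" where
  "Ck 0 f S = continuous_on S f"
| "Ck (Suc k) f S = (\<exists>f'. (\<forall>x\<in>S. (f has_derivative f' x) (at x)) \<and> (\<forall>v. Ck k (\<lambda>x. f' x v) S))"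

definition smooth_on :: "('a::real_normed_vector \<Rightarrow> 'b::real_normed_vector) \<Rightarrow> 'a set \<Rightarrow> bool" where
  "smooth_on f S \<longleftrightarrow> (\<forall>k. Ck k f S)"

definition pdx :: "'n::finite \<Rightarrow> (real^'n \<Rightarrow> complex) \<Rightarrow> real^'n \<Rightarrow> complex" where
  "pdx j f x = vector_derivative (\<lambda>h. f (x + h *\<^sub>R axis j 1)) (at 0)"

definition lap :: "(real^'n::finite \<Rightarrow> complex) \<Rightarrow> real^'n \<Rightarrow> complex" where
  "lap f x = (\<Sum>j\<in>UNIV. pdx j (pdx j f) x)"

definition phi :: "real \<Rightarrow> complex \<times> complex" where
  "phi a = (1, -1 + \<i> / of_real a)"

definition phistar :: "real \<Rightarrow> complex \<times> complex" where
  "phistar a = ((1 - \<i> * of_real a) / 2, (- \<i> * of_real a) / 2)"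

text \<open>Bilinear dot product (no conjugation).\<close>
definition cdot :: "complex \<times> complex \<Rightarrow> complex \<times> complex \<Rightarrow> complex" where
  "cdot p q = fst p * fst q + snd p * snd q"

definition psi0 :: "real \<Rightarrow> (real^'n \<Rightarrow> real \<Rightarrow> complex) \<Rightarrow> real \<Rightarrow> real^'n \<Rightarrow> real \<Rightarrow> complex \<times> complex" where
  "psi0 a A t x tb =
     (A x tb * fst (phi a) * exp (\<i> * of_real (a * t)) + cnj (A x tb) * cnj (fst (phi a)) * exp (- \<i> * of_real (a * t)),
      A x tb * snd (phi a) * exp (\<i> * of_real (a * t)) + cnj (A x tb) * cnj (snd (phi a)) * exp (- \<i> * of_real (a * t)))"

text \<open>Order r^1 forcing: (1+a^2)/a p1^2 + 2 a p1 p2 (multiplied by (1,-1)).\<close>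
definition forc1 :: "real \<Rightarrow> complex \<Rightarrow> complex \<Rightarrow> complex" where
  "forc1 a p1 p2 = of_real ((1 + a\<^sup>2) / a) * p1\<^sup>2 + of_real (2 * a) * p1 * p2"

text \<open>Nonlinear/scalar part of B^(2) (multiplied by (1,-1)).\<close>
definition nl2 :: "real \<Rightarrow> real \<Rightarrow> complex \<Rightarrow> complex \<Rightarrow> complex \<Rightarrow> complex \<Rightarrow> complex" where
  "nl2 a mub p01 p02 p11 p12 =
     of_real ((1 + a\<^sup>2) * mub) * p01 + of_real (2 * (1 + a\<^sup>2) / a) * p01 * p11
     + of_real (2 * a) * (p01 * p12 + p11 * p02) + p01\<^sup>2 * p02"

definition B2 :: "real \<Rightarrow> real \<Rightarrow> real \<Rightarrow> (real^'n::finite \<Rightarrow> real \<Rightarrow> complex) \<Rightarrow> (real \<Rightarrow> real) \<Rightarrow> (real \<Rightarrow> real)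
     \<Rightarrow> (real \<Rightarrow> real^'n \<Rightarrow> real \<Rightarrow> real) \<Rightarrow> (real \<Rightarrow> real^'n \<Rightarrow> real \<Rightarrow> real)
     \<Rightarrow> real \<Rightarrow> real^'n \<Rightarrow> real \<Rightarrow> complex \<times> complex" where
  "B2 a d1 d2 A r mub p1u p1v t x tb =
     (let p0 = psi0 a A t x tb;
          rr = of_real (deriv r tb / r tb);
          N = nl2 a (mub tb) (fst p0) (snd p0) (of_real (p1u t x tb)) (of_real (p1v t x tb))
      in ( - (vector_derivative (\<lambda>s. fst (psi0 a A t x s)) (at tb) + rr * fst p0)
             + of_real d1 * lap (\<lambda>y. fst (psi0 a A t y tb)) x + N,
           - (vector_derivative (\<lambda>s. snd (psi0 a A t x s)) (at tb) + rr * snd p0)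
             + of_real d2 * lap (\<lambda>y. snd (psi0 a A t y tb)) x - N))"

definition fourier1 :: "real \<Rightarrow> (real \<Rightarrow> complex) \<Rightarrow> complex" where
  "fourier1 a g = of_real (a / (2 * pi)) * integral {0..2 * pi / a} (\<lambda>t. g t * exp (- \<i> * of_real (a * t)))"

definition B21 :: "real \<Rightarrow> real \<Rightarrow> real \<Rightarrow> (real^'n::finite \<Rightarrow> real \<Rightarrow> complex) \<Rightarrow> (real \<Rightarrow> real) \<Rightarrow> (real \<Rightarrow> real)
     \<Rightarrow> (real \<Rightarrow> real^'n \<Rightarrow> real \<Rightarrow> real) \<Rightarrow> (real \<Rightarrow> real^'n \<Rightarrow> real \<Rightarrow> real)
     \<Rightarrow> real^'n \<Rightarrow> real \<Rightarrow> complex \<times> complex" where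
  "B21 a d1 d2 A r mub p1u p1v x tb =
     (fourier1 a (\<lambda>t. fst (B2 a d1 d2 A r mub p1u p1v t x tb)),
      fourier1 a (\<lambda>t. snd (B2 a d1 d2 A r mub p1u p1v t x tb)))"

definition c1 :: "real \<Rightarrow> real \<Rightarrow> real \<Rightarrow> complex" where
  "c1 a d1 d2 = (of_real (d1 + d2) - \<i> * of_real (a * (d1 - d2))) / 2"

definition c2 :: "real \<Rightarrow> real" where
  "c2 a = (1 + a\<^sup>2) / 2"

definition c3 :: "real \<Rightarrow> complex" where
  "c3 a = (of_real ((2 + a\<^sup>2) / a\<^sup>2) + \<i> * of_real ((4 - 7 * a\<^sup>2 + 4 * a ^ 4) / (3 * a ^ 3))) / 2"

end

theory Submission
  imports Defs
begin

lemma exp_period_int: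
  fixes a :: real and n :: int
  assumes a: "a > 0" and n: "n \<noteq> 0"
  shows "((\<lambda>t. exp (\<i> * of_real (of_int n * a * t))) has_integral 0) {0..2*pi/a}"
proof -
  define w where "w = \<i> * of_real (of_int n * a)"
  have w0: "w \<noteq> 0" using a n by (simp add: w_def)
  have d: "\<And>t. ((\<lambda>t. exp (w * of_real t) / w) has_vector_derivative exp (\<i> * of_real (of_int n * a * t))) (at t within {0..2*pi/a})"
  proof -
    fix t
    have "((\<lambda>t. exp (w * of_real t) / w) has_vector_derivative (exp (w * of_real t) * (w * 1)) / w) (at t within {0..2*pi/a})"
      by (rule has_vector_derivative_real_field derivative_eq_intros refl)+ simp
    moreover have "(exp (w * of_real t) * (w * 1)) / w = exp (\<i> * of_real (of_int n * a * t))"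
      using w0 by (simp add: w_def mult.assoc)
    ultimately show "?thesis t" by simp
  qed
  have "((\<lambda>t. exp (\<i> * of_real (of_int n * a * t))) has_integral (exp (w * of_real (2*pi/a)) / w - exp (w * of_real 0) / w)) {0..2*pi/a}"
    apply (rule fundamental_theorem_of_calculus)
    using a apply simp
    by (rule d)
  moreover have "exp (w * of_real (2*pi/a)) = 1"
  proof -
    have "w * of_real (2*pi/a) = (2 * of_int n * pi) * \<i>" using a by (simp add: w_def field_simps)
    moreover have "exp ((2 * of_int n * pi) * \<i>) = 1" by (rule exp_integer_2pi) simp
    ultimately show ?thesis by simp
  qed
  ultimately show ?thesis by simp
qed

lemma trig_int:
  fixes a :: real
  assumes a: "a > 0"
  shows "((\<lambda>t. K0 + K1 * exp (\<i> * of_real (a*t))^2 + K2 * exp (- \<i> * of_real (a*t))^2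
             + K3 * exp (- \<i> * of_real (a*t))^4) has_integral (of_real (2*pi/a) * K0)) {0..2*pi/a}"
proof -
  have e1: "\<And>t. exp (\<i> * of_real (a*t))^2 = exp (\<i> * of_real (of_int 2 * a * t))"
  proof -
    fix t have "\<i> * of_real (of_int 2 * a * t) = of_nat 2 * (\<i> * of_real (a*t))" by simp
    thus "?thesis t" by (simp only: exp_of_nat_mult)
  qed
  have e2: "\<And>t. exp (- \<i> * of_real (a*t))^2 = exp (\<i> * of_real (of_int (-2) * a * t))"
  proof -
    fix t have "\<i> * of_real (of_int (-2) * a * t) = of_nat 2 * (- \<i> * of_real (a*t))" by simp
    thus "?thesis t" by (simp only: exp_of_nat_mult)
  qed
  have e3: "\<And>t. exp (- \<i> * of_real (a*t))^4 = exp (\<i> * of_real (of_int (-4) * a * t))"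
  proof -
    fix t have "\<i> * of_real (of_int (-4) * a * t) = of_nat 4 * (- \<i> * of_real (a*t))" by simp
    thus "?thesis t" by (simp only: exp_of_nat_mult)
  qed
  have i0: "((\<lambda>t. K0) has_integral (of_real (2*pi/a) * K0)) {0..2*pi/a}"
    using has_integral_const_real[of K0 0 "2*pi/a"] a by (simp add: scaleR_conv_of_real)
  have i1: "((\<lambda>t. K1 * exp (\<i> * of_real (of_int 2 * a * t))) has_integral K1 * 0) {0..2*pi/a}"
    by (rule has_integral_mult_right, rule exp_period_int[OF a]) simp
  have i2: "((\<lambda>t. K2 * exp (\<i> * of_real (of_int (-2) * a * t))) has_integral K2 * 0) {0..2*pi/a}"
    by (rule has_integral_mult_right, rule exp_period_int[OF a]) simp
  have i3: "((\<lambda>t. K3 * exp (\<i> * of_real (of_int (-4) * a * t))) has_integral K3 * 0) {0..2*pi/a}"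
    by (rule has_integral_mult_right, rule exp_period_int[OF a]) simp
  have "((\<lambda>t. K0 + K1 * exp (\<i> * of_real (of_int 2 * a * t)) + K2 * exp (\<i> * of_real (of_int (-2) * a * t))
      + K3 * exp (\<i> * of_real (of_int (-4) * a * t))) has_integral (of_real (2*pi/a) * K0 + K1 * 0 + K2 * 0 + K3 * 0)) {0..2*pi/a}"
    by (intro has_integral_add i0 i1 i2 i3)
  thus ?thesis unfolding e1 e2 e3 by simp
qed

lemma ode_int:
  fixes a :: real and k :: int and u v F y :: "real \<Rightarrow> complex"
  assumes a: "a > 0"
    and dy: "\<And>t. (y has_vector_derivative (\<alpha> * u t + \<beta> * v t + \<gamma> * F t)) (at t)"
    and cu: "continuous_on UNIV u" and cv: "continuous_on UNIV v" and cF: "continuous_on UNIV F"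
    and per: "y (2*pi/a) = y 0"
  shows "\<alpha> * integral {0..2*pi/a} (\<lambda>t. u t * exp (- \<i> * of_real (of_int k * a * t)))
       + \<beta> * integral {0..2*pi/a} (\<lambda>t. v t * exp (- \<i> * of_real (of_int k * a * t)))
       + \<gamma> * integral {0..2*pi/a} (\<lambda>t. F t * exp (- \<i> * of_real (of_int k * a * t)))
       = \<i> * of_int k * of_real a * integral {0..2*pi/a} (\<lambda>t. y t * exp (- \<i> * of_real (of_int k * a * t)))"
proof -
  define P where "P = 2*pi/a"
  define ek where "ek t = exp (- \<i> * of_real (of_int k * a * t))" for t
  have cy: "continuous_on UNIV y"
    using dy by (meson continuous_at_imp_continuous_on has_vector_derivative_continuous)
  have cek: "continuous_on UNIV ek" unfolding ek_def by (intro continuous_intros)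
  have dek: "(ek has_vector_derivative (- \<i> * of_int k * of_real a) * ek t) (at t within S)" for t S
  proof -
    have "((\<lambda>t. exp ((- \<i> * of_int k * of_real a) * of_real t)) has_vector_derivative
        exp ((- \<i> * of_int k * of_real a) * of_real t) * ((- \<i> * of_int k * of_real a) * 1)) (at t within S)"
      by (rule has_vector_derivative_real_field derivative_eq_intros refl)+ simp
    moreover have "(\<lambda>t. exp ((- \<i> * of_int k * of_real a) * of_real t)) = ek"
      by (auto simp: ek_def fun_eq_iff mult_ac)
    ultimately show ?thesis by (simp add: ek_def mult_ac)
  qed
  have FT: "((\<lambda>t. (\<alpha> * u t + \<beta> * v t + \<gamma> * F t) * ek t + y t * ((- \<i> * of_int k * of_real a) * ek t))
      has_integral (y P * ek P - y 0 * ek 0)) {0..P}"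
    apply (rule fundamental_theorem_of_calculus)
    using a apply (simp add: P_def)
    apply (rule derivative_eq_intros)
      apply (rule has_vector_derivative_at_within[OF dy])
     apply (rule dek)
    by simp
  have ekP: "ek P = 1"
  proof -
    have eq: "- \<i> * of_real (of_int k * a * P) = (2 * of_int (-k) * pi) * \<i>" using a by (simp add: P_def field_simps)
    have "exp ((2 * of_int (-k) * pi) * \<i>) = 1" by (rule exp_integer_2pi) simp
    thus ?thesis by (simp only: ek_def eq)
  qed
  have "integral {0..P} (\<lambda>t. (\<alpha> * u t + \<beta> * v t + \<gamma> * F t) * ek t + y t * ((- \<i> * of_int k * of_real a) * ek t)) = 0"
    using FT ekP per by (simp add: P_def ek_def integral_unique)
  moreover have "(\<lambda>t. (\<alpha> * u t + \<beta> * v t + \<gamma> * F t) * ek t + y t * ((- \<i> * of_int k * of_real a) * ek t))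
     = (\<lambda>t. \<alpha> * (u t * ek t) + \<beta> * (v t * ek t) + \<gamma> * (F t * ek t) - (\<i> * of_int k * of_real a) * (y t * ek t))"
    by (auto simp: fun_eq_iff algebra_simps)
  moreover have int: "\<And>g. continuous_on UNIV g \<Longrightarrow> (\<lambda>t. g t * ek t) integrable_on {0..P}"
  proof -
    fix g :: "real \<Rightarrow> complex" assume "continuous_on UNIV g"
    hence "continuous_on UNIV (\<lambda>t. g t * ek t)" using cek by (rule continuous_on_mult)
    hence "continuous_on {0..P} (\<lambda>t. g t * ek t)" by (rule continuous_on_subset) simp
    thus "(\<lambda>t. g t * ek t) integrable_on {0..P}" by (rule integrable_continuous_interval)
  qed
  have iu: "(\<lambda>t. u t * ek t) integrable_on {0..P}" by (rule int[OF cu])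
  have iv: "(\<lambda>t. v t * ek t) integrable_on {0..P}" by (rule int[OF cv])
  have iF: "(\<lambda>t. F t * ek t) integrable_on {0..P}" by (rule int[OF cF])
  have iy: "(\<lambda>t. y t * ek t) integrable_on {0..P}" by (rule int[OF cy])
  have "integral {0..P} (\<lambda>t. \<alpha> * (u t * ek t) + \<beta> * (v t * ek t) + \<gamma> * (F t * ek t) - (\<i> * of_int k * of_real a) * (y t * ek t))
     = \<alpha> * integral {0..P} (\<lambda>t. u t * ek t) + \<beta> * integral {0..P} (\<lambda>t. v t * ek t)
      + \<gamma> * integral {0..P} (\<lambda>t. F t * ek t) - (\<i> * of_int k * of_real a) * integral {0..P} (\<lambda>t. y t * ek t)"
    apply (subst integral_diff)
      apply (intro integrable_add integrable_on_mult_right iu iv iF iy)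
     apply (intro integrable_add integrable_on_mult_right iu iv iF iy)
    apply (subst integral_add)
      apply (intro integrable_add integrable_on_mult_right iu iv iF iy)
     apply (intro integrable_add integrable_on_mult_right iu iv iF iy)
    apply (subst integral_add)
      apply (intro integrable_add integrable_on_mult_right iu iv iF iy)
     apply (intro integrable_add integrable_on_mult_right iu iv iF iy)
    apply (simp only: integral_mult_right)
    done
  ultimately have "\<alpha> * integral {0..P} (\<lambda>t. u t * ek t) + \<beta> * integral {0..P} (\<lambda>t. v t * ek t)
      + \<gamma> * integral {0..P} (\<lambda>t. F t * ek t) - (\<i> * of_int k * of_real a) * integral {0..P} (\<lambda>t. y t * ek t) = 0"
    by simp
  thus ?thesis unfolding P_def ek_def by (simp add: algebra_simps)
qed

lemma lin_zero_pos:
  fixes h g :: "real \<Rightarrow> real"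
  assumes t: "0 \<le> t" and hd: "\<And>s. 0 \<le> s \<Longrightarrow> s \<le> t \<Longrightarrow> (h has_real_derivative g s * h s) (at s)"
    and K: "\<And>s. 0 \<le> s \<Longrightarrow> s \<le> t \<Longrightarrow> \<bar>g s\<bar> \<le> K" and h0: "h 0 = 0"
  shows "h t = 0"
proof -
  define k where "k s = (h s)^2 * exp (- (2 * K * s))" for s
  have "k t \<le> k 0"
  proof (rule DERIV_nonpos_imp_nonincreasing[OF t])
    fix s assume s: "0 \<le> s" "s \<le> t"
    have "(k has_real_derivative (2 * h s * (g s * h s) * exp (- (2 * K * s)) + (h s)^2 * (exp (- (2 * K * s)) * (- (2 * K))))) (at s)"
      unfolding k_def by (auto intro!: derivative_eq_intros hd[OF s] simp: power2_eq_square)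
    moreover have "2 * h s * (g s * h s) * exp (- (2 * K * s)) + (h s)^2 * (exp (- (2 * K * s)) * (- (2 * K)))
        = 2 * (g s - K) * (h s)^2 * exp (- (2 * K * s))" by (simp add: algebra_simps power2_eq_square)
    moreover have "2 * (g s - K) * (h s)^2 * exp (- (2 * K * s)) \<le> 0"
    proof -
      have "g s - K \<le> 0" using K[OF s] by linarith
      thus ?thesis by (simp add: mult_nonpos_nonneg)
    qed
    ultimately show "\<exists>y. (k has_real_derivative y) (at s) \<and> y \<le> 0" by metis
  qed
  hence "(h t)^2 * exp (- (2 * K * t)) \<le> 0" using h0 by (simp add: k_def)
  hence "(h t)^2 \<le> 0" by (simp add: mult_le_0_iff)
  thus ?thesis by simp
qed

lemma lin_zero:
  fixes h g :: "real \<Rightarrow> real"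
  assumes T: "is_interval T" and T0: "0 \<in> T" and tT: "t \<in> T"
    and hd: "\<And>s. s \<in> T \<Longrightarrow> (h has_real_derivative g s * h s) (at s)"
    and cg: "continuous_on T g" and h0: "h 0 = 0"
  shows "h t = 0"
proof -
  define I where "I = {min 0 t .. max 0 t}"
  have IT: "I \<subseteq> T"
  proof
    fix s assume "s \<in> I"
    hence s: "min 0 t \<le> s" "s \<le> max 0 t" by (auto simp: I_def)
    have iv: "\<And>p q x. p \<in> T \<Longrightarrow> q \<in> T \<Longrightarrow> p \<le> x \<Longrightarrow> x \<le> q \<Longrightarrow> x \<in> T"
      using T unfolding is_interval_1 by blast
    show "s \<in> T"
    proof (cases "0 \<le> t")
      case True thus ?thesis using iv[OF T0 tT, of s] s by simp
    next
      case False thus ?thesis using iv[OF tT T0, of s] s by simp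
    qed
  qed
  have "compact (g ` I)" unfolding I_def
    by (rule compact_continuous_image[OF continuous_on_subset[OF cg IT[unfolded I_def]]]) (rule compact_Icc)
  then obtain K where K: "\<And>s. s \<in> I \<Longrightarrow> \<bar>g s\<bar> \<le> K"
    using compact_imp_bounded[of "g ` I"] unfolding bounded_iff by fastforce
  show ?thesis
  proof (cases "0 \<le> t")
    case True
    show ?thesis
    proof (rule lin_zero_pos[OF True, of h g K])
      fix s assume s: "0 \<le> s" "s \<le> t"
      hence sI: "s \<in> I" using True by (simp add: I_def)
      show "(h has_real_derivative g s * h s) (at s)" using hd IT sI by blast
      show "\<bar>g s\<bar> \<le> K" using K sI by blast
    qed (rule h0)
  next
    case False
    have "(\<lambda>s. h (- s)) (-t) = 0"
    proof (rule lin_zero_pos[of "-t" _ "\<lambda>s. - g (- s)" K])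
      show "0 \<le> - t" using False by simp
    next
      fix s assume s: "0 \<le> s" "s \<le> -t"
      hence sI: "-s \<in> I" using False by (auto simp: I_def)
      show "\<bar>- g (- s)\<bar> \<le> K" using K[OF sI] by simp
      have "(h has_real_derivative g (-s) * h (-s)) (at (-s))" using hd IT sI by auto
      moreover have "((\<lambda>s. -s) has_real_derivative -1) (at s)" by (auto intro!: derivative_eq_intros)
      ultimately have "((\<lambda>s. h (-s)) has_real_derivative (g (-s) * h (-s)) * (-1)) (at s)"
        by (rule DERIV_chain2)
      thus "((\<lambda>s. h (- s)) has_real_derivative - g (- s) * h (- s)) (at s)" by simp
    qed (use h0 in simp)
    thus ?thesis by simp
  qed
qed

lemma riccati:
  fixes y :: "real \<Rightarrow> real" and c :: real
  assumes T: "is_interval T" and T0: "0 \<in> T" and tT: "t \<in> T"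
    and yd: "\<And>s. s \<in> T \<Longrightarrow> (y has_real_derivative c * (y s)^2) (at s)"
  shows "y t = y 0 / (1 - c * y 0 * t)"
proof -
  define h where "h s = y s * (1 - c * y 0 * s) - y 0" for s
  have cy: "continuous_on T y" using yd
    by (meson DERIV_isCont continuous_at_imp_continuous_on)
  have "h t = 0"
  proof (rule lin_zero[OF T T0 tT, of h "\<lambda>s. c * y s"])
    fix s assume s: "s \<in> T"
    have "(h has_real_derivative c * (y s)^2 * (1 - c * y 0 * s) + y s * (- (c * y 0 * 1))) (at s)"
      unfolding h_def by (auto intro!: derivative_eq_intros yd[OF s])
    moreover have "c * (y s)^2 * (1 - c * y 0 * s) + y s * (- (c * y 0 * 1)) = c * y s * h s"
      by (simp add: h_def algebra_simps power2_eq_square)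
    ultimately show "(h has_real_derivative c * y s * h s) (at s)" by simp
  next
    show "continuous_on T (\<lambda>s. c * y s)" by (intro continuous_intros cy)
  qed (simp add: h_def)
  hence e: "y t * (1 - c * y 0 * t) = y 0" by (simp add: h_def)
  show ?thesis
  proof (cases "1 - c * y 0 * t = 0")
    case True
    hence "y 0 = 0" using e by simp
    thus ?thesis using True by simp
  next
    case False thus ?thesis using e by (simp add: field_simps)
  qed
qed

lemma line_deriv:
  fixes f :: "'a::real_normed_vector \<Rightarrow> 'b::real_normed_vector"
  assumes "(f has_derivative D) (at (p + h *\<^sub>R w))"
  shows "((\<lambda>k. f (p + k *\<^sub>R w)) has_vector_derivative D w) (at h)"
proof -
  have l: "((\<lambda>k. p + k *\<^sub>R w) has_derivative (\<lambda>k. k *\<^sub>R w)) (at h)"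
    by (auto intro!: derivative_eq_intros)
  have "((\<lambda>k. f (p + k *\<^sub>R w)) has_derivative (\<lambda>k. D (k *\<^sub>R w))) (at h)"
    using has_derivative_compose[OF l assms] .
  moreover have "linear D" using assms by (rule has_derivative_linear)
  hence "(\<lambda>k. D (k *\<^sub>R w)) = (\<lambda>k. k *\<^sub>R D w)" by (simp add: linear_cmul fun_eq_iff)
  ultimately show ?thesis by (simp add: has_vector_derivative_def)
qed

lemma line_diff:
  fixes f :: "'a::real_normed_vector \<Rightarrow> 'b::real_normed_vector"
  assumes "f differentiable (at (p + h *\<^sub>R w))"
  shows "(\<lambda>k. f (p + k *\<^sub>R w)) differentiable (at h)"
proof -
  obtain D where "(f has_derivative D) (at (p + h *\<^sub>R w))" using assms by (auto simp: differentiable_def)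
  from line_deriv[OF this] show ?thesis by (rule differentiableI_vector)
qed

lemma pdx_lin:
  fixes F :: "real^'n::finite \<Rightarrow> complex"
  assumes "(\<lambda>h. F (y + h *\<^sub>R axis j 1)) differentiable (at 0)"
  shows "pdx j (\<lambda>y. \<alpha> * F y + \<beta> * cnj (F y)) y = \<alpha> * pdx j F y + \<beta> * cnj (pdx j F y)"
proof -
  have d: "((\<lambda>h. F (y + h *\<^sub>R axis j 1)) has_vector_derivative pdx j F y) (at 0)"
    using assms unfolding pdx_def vector_derivative_works .
  have "((\<lambda>h. \<alpha> * F (y + h *\<^sub>R axis j 1) + \<beta> * cnj (F (y + h *\<^sub>R axis j 1))) has_vector_derivative
      \<alpha> * pdx j F y + \<beta> * cnj (pdx j F y)) (at 0)"
    by (intro has_vector_derivative_add has_vector_derivative_mult_right has_vector_derivative_cnj d)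
  thus ?thesis unfolding pdx_def[of j "\<lambda>y. \<alpha> * F y + \<beta> * cnj (F y)"] by (rule vector_derivative_at)
qed

lemma lap_lin:
  fixes F :: "real^'n::finite \<Rightarrow> complex"
  assumes d1: "\<And>j y. (\<lambda>h. F (y + h *\<^sub>R axis j 1)) differentiable (at 0)"
    and d2: "\<And>j. (\<lambda>h. pdx j F (x + h *\<^sub>R axis j 1)) differentiable (at 0)"
  shows "lap (\<lambda>y. \<alpha> * F y + \<beta> * cnj (F y)) x = \<alpha> * lap F x + \<beta> * cnj (lap F x)"
proof -
  have "\<And>j. pdx j (\<lambda>y. \<alpha> * F y + \<beta> * cnj (F y)) = (\<lambda>y. \<alpha> * pdx j F y + \<beta> * cnj (pdx j F y))"
    using pdx_lin[OF d1] by (simp add: fun_eq_iff)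
  hence "\<And>j. pdx j (pdx j (\<lambda>y. \<alpha> * F y + \<beta> * cnj (F y))) x = \<alpha> * pdx j (pdx j F) x + \<beta> * cnj (pdx j (pdx j F) x)"
    using pdx_lin[OF d2] by simp
  thus ?thesis unfolding lap_def by (simp add: sum.distrib sum_distrib_left)
qed

lemma smooth_facts:
  fixes A :: "real^'n::finite \<Rightarrow> real \<Rightarrow> complex"
  assumes "smooth_on (\<lambda>(x, s). A x s) (UNIV \<times> T)"
  obtains f' where "\<And>z. z \<in> UNIV \<times> T \<Longrightarrow> ((\<lambda>(x, s). A x s) has_derivative f' z) (at z)"
    and "\<And>z v. z \<in> UNIV \<times> T \<Longrightarrow> (\<lambda>z. f' z v) differentiable (at z)"
proof -
  have "Ck (Suc (Suc 0)) (\<lambda>(x, s). A x s) (UNIV \<times> T)" using assms unfolding smooth_on_def by blast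
  then obtain f' where 1: "\<forall>z\<in>UNIV \<times> T. ((\<lambda>(x, s). A x s) has_derivative f' z) (at z)"
     and 2: "\<forall>v. Ck (Suc 0) (\<lambda>z. f' z v) (UNIV \<times> T)" by auto
  have "\<And>z v :: (real^'n) \<times> real. z \<in> UNIV \<times> T \<Longrightarrow> (\<lambda>z. f' z v) differentiable (at z)"
  proof -
    fix z v :: "(real^'n) \<times> real" assume z: "z \<in> UNIV \<times> T"
    have "Ck (Suc 0) (\<lambda>z. f' z v) (UNIV \<times> T)" using 2 by blast
    then obtain g where "\<forall>z\<in>UNIV \<times> T. ((\<lambda>z. f' z v) has_derivative g z) (at z)"
      by (simp only: Ck.simps) blast
    thus "(\<lambda>z. f' z v) differentiable (at z)" using z unfolding differentiable_def by blast
  qed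
  thus ?thesis using 1 that by blast
qed

lemma alg_H:
  fixes P1 P2 C1 C2 S1 S2 Av cA Ad cAd L cL rr m \<kappa> \<delta> D1 D2 u v z e :: complex
  assumes ze: "z * e = 1"
  defines "p01 \<equiv> Av * P1 * z + cA * C1 * e"
  defines "p02 \<equiv> Av * P2 * z + cA * C2 * e"
  defines "N \<equiv> m * p01 + \<kappa> * p01 * u + \<delta> * (p01 * v + u * p02) + p01\<^sup>2 * p02"
  shows "(S1 * (- (Ad * P1 * z + cAd * C1 * e + rr * p01) + D1 * (L * P1 * z + cL * C1 * e) + N)
        + S2 * (- (Ad * P2 * z + cAd * C2 * e + rr * p02) + D2 * (L * P2 * z + cL * C2 * e) - N)) * e
      = (- (S1*P1+S2*P2)*(Ad + rr*Av) + (D1*S1*P1 + D2*S2*P2)*L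
           + (S1-S2)*(m*Av*P1 + (Av*P1)^2*(cA*C2) + 2*(Av*P1)*(cA*C1)*(Av*P2)))
        + ((S1-S2)*(Av*P1)^2*(Av*P2)) * z^2
        + (- (S1*C1+S2*C2)*(cAd + rr*cA) + (D1*S1*C1 + D2*S2*C2)*cL
           + (S1-S2)*(m*cA*C1 + 2*(Av*P1)*(cA*C1)*(cA*C2) + (cA*C1)^2*(Av*P2))) * e^2
        + ((S1-S2)*(cA*C1)^2*(cA*C2)) * e^4
        + u * ((S1-S2)*(\<kappa>*Av*P1 + \<delta>*Av*P2) + (S1-S2)*(\<kappa>*cA*C1 + \<delta>*cA*C2) * e^2)
        + v * ((S1-S2)*\<delta>*Av*P1 + (S1-S2)*\<delta>*cA*C1 * e^2)"
  unfolding p01_def p02_def N_def using ze by algebra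

lemma alg_F0:
  fixes c d al be ga et z e :: complex
  assumes ze: "z * e = 1"
  shows "(c * (al * z + be * e)\<^sup>2 + d * (al * z + be * e) * (ga * z + et * e)) * e ^ 0
    = (c*2*al*be + d*(al*et + be*ga)) + (c*al^2 + d*al*ga) * z^2 + (c*be^2 + d*be*et) * e^2 + 0 * e^4"
  using ze by algebra

lemma alg_F2:
  fixes c d al be ga et z e :: complex
  assumes ze: "z * e = 1"
  shows "(c * (al * z + be * e)\<^sup>2 + d * (al * z + be * e) * (ga * z + et * e)) * e ^ 2
    = (c*al^2 + d*al*ga) + 0 * z^2 + (c*2*al*be + d*(al*et + be*ga)) * e^2 + (c*be^2 + d*be*et) * e^4"
  using ze by algebra

lemma alg_final:
  fixes ac Pc Pinv Av cA Ad cAd L cL D1 D2 rr mu m Iu0 Iv0 Iu2 Iv2 IF0 IF2 P1 P2 C1 C2 S1 S2 c d \<kappa> \<delta> nrm T1 T2 T3 :: complex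
  assumes a0: "ac \<noteq> 0" and P0: "Pinv * Pc = 1"
    and hP1: "P1 = 1" and hP2: "P2 = -1 + \<i> / ac" and hC1: "C1 = 1" and hC2: "C2 = -1 - \<i> / ac"
    and hS1: "S1 = (1 - \<i> * ac) / 2" and hS2: "S2 = (- \<i> * ac) / 2"
    and hc: "c = (1 + ac^2) / ac" and hd: "d = 2 * ac" and hk: "\<kappa> = 2 * (1 + ac^2) / ac" and hdl: "\<delta> = 2 * ac"
    and hm: "m = (1 + ac^2) * mu" and hn: "nrm = Av * cA"
    and hT1: "T1 = (D1 + D2 - \<i> * (ac * (D1 - D2))) / 2" and hT2: "T2 = (1 + ac^2) / 2 * mu - rr"
    and hT3: "T3 = ((2 + ac^2) / ac^2 + \<i> * ((4 - 7 * ac^2 + 4 * ac^4) / (3 * ac^3))) / 2"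
    and hIF0: "IF0 = Pc * (c*2*(Av*P1)*(cA*C1) + d*((Av*P1)*(cA*C2) + (cA*C1)*(Av*P2)))"
    and hIF2: "IF2 = Pc * (c*(Av*P1)^2 + d*(Av*P1)*(Av*P2))"
    and u0: "ac^2 * Iu0 + ac^2 * Iv0 + 1 * IF0 = \<i> * of_int 0 * ac * Iu0"
    and v0: "- (1 + ac^2) * Iu0 + - (ac^2) * Iv0 + -1 * IF0 = \<i> * of_int 0 * ac * Iv0"
    and u2: "ac^2 * Iu2 + ac^2 * Iv2 + 1 * IF2 = \<i> * of_int 2 * ac * Iu2"
    and v2: "- (1 + ac^2) * Iu2 + - (ac^2) * Iv2 + -1 * IF2 = \<i> * of_int 2 * ac * Iv2"
  shows "Pinv * (Pc * (- (S1*P1+S2*P2)*(Ad + rr*Av) + (D1*S1*P1 + D2*S2*P2)*L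
           + (S1-S2)*(m*Av*P1 + (Av*P1)^2*(cA*C2) + 2*(Av*P1)*(cA*C1)*(Av*P2)))
         + ((S1-S2)*(\<kappa>*Av*P1 + \<delta>*Av*P2) * Iu0 + (S1-S2)*(\<kappa>*cA*C1 + \<delta>*cA*C2) * Iu2)
         + ((S1-S2)*\<delta>*Av*P1 * Iv0 + (S1-S2)*\<delta>*cA*C1 * Iv2))
     = T1 * L + T2 * Av - T3 * Av * nrm - Ad"
proof -
  have ii: "\<i> * \<i> = -1" by simp
  have Pc0: "Pc \<noteq> 0" using P0 by auto
  have Pinv: "Pinv = 1 / Pc" using P0 Pc0 by (simp add: field_simps)
  define F0 where "F0 = c*2*(Av*P1)*(cA*C1) + d*((Av*P1)*(cA*C2) + (cA*C1)*(Av*P2))"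
  define F2 where "F2 = c*(Av*P1)^2 + d*(Av*P1)*(Av*P2)"
  have u0': "ac^2 * Iu0 + ac^2 * Iv0 + (Pc * F0) = 0" using u0 hIF0 by (simp add: F0_def)
  have v0': "- (1 + ac^2) * Iu0 - (ac^2) * Iv0 - (Pc * F0) = 0" using v0 hIF0 by (simp add: F0_def)
  have u2': "ac^2 * Iu2 + ac^2 * Iv2 + (Pc * F2) = \<i> * 2 * ac * Iu2" using u2 hIF2 by (simp add: F2_def)
  have v2': "- (1 + ac^2) * Iu2 - (ac^2) * Iv2 - (Pc * F2) = \<i> * 2 * ac * Iv2" using v2 hIF2 by (simp add: F2_def)
  have e0: "Iu0 = 0" using u0' v0' by algebra
  have e1: "ac^2 * Iv0 = - Pc * F0" using u0' e0 by algebra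
  have e2: "3 * ac^2 * Iu2 = - 2 * \<i> * ac * Pc * F2" using u2' v2' ii by algebra
  have e3: "3 * ac^2 * Iv2 = (1 + 2 * \<i> * ac) * Pc * F2" using u2' v2' ii by algebra
  have Iv0: "Iv0 = - Pc * F0 / ac^2" using e1 a0 by (simp add: field_simps)
  have "ac * (3 * ac * Iu2 + 2 * \<i> * Pc * F2) = 0" using e2 by algebra
  hence "3 * ac * Iu2 + 2 * \<i> * Pc * F2 = 0" using a0 by simp
  hence Iu2: "Iu2 = - 2 * \<i> * Pc * F2 / (3 * ac)" using a0 by (simp add: field_simps) algebra
  have Iv2: "Iv2 = (1 + 2 * \<i> * ac) * Pc * F2 / (3 * ac^2)" using e3 a0 by (simp add: field_simps)
  show ?thesis
    unfolding Pinv e0 Iv0 Iu2 Iv2 F0_def F2_def hP1 hP2 hC1 hC2 hS1 hS2 hc hd hk hdl hm hn hT1 hT2 hT3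
    using a0 Pc0 by (simp add: field_simps) algebra
qed

lemma core_deriv:
  fixes a :: real and T :: "real set" and A :: "real^'n::finite \<Rightarrow> real \<Rightarrow> complex"
    and x :: "real^'n" and tb :: real
  assumes A_smooth: "smooth_on (\<lambda>(x, s). A x s) (UNIV \<times> T)" and tbT: "tb \<in> T"
  shows "((\<lambda>s. A x s) has_vector_derivative vector_derivative (\<lambda>s. A x s) (at tb)) (at tb)"
    and "\<And>t. vector_derivative (\<lambda>s. fst (psi0 a A t x s)) (at tb)
       = (fst (phi a) * exp (\<i> * of_real (a * t))) * vector_derivative (\<lambda>s. A x s) (at tb)
         + (cnj (fst (phi a)) * exp (- \<i> * of_real (a * t))) * cnj (vector_derivative (\<lambda>s. A x s) (at tb))"
    and "\<And>t. vector_derivative (\<lambda>s. snd (psi0 a A t x s)) (at tb)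
       = (snd (phi a) * exp (\<i> * of_real (a * t))) * vector_derivative (\<lambda>s. A x s) (at tb)
         + (cnj (snd (phi a)) * exp (- \<i> * of_real (a * t))) * cnj (vector_derivative (\<lambda>s. A x s) (at tb))"
    and "\<And>t. lap (\<lambda>y. fst (psi0 a A t y tb)) x
       = (fst (phi a) * exp (\<i> * of_real (a * t))) * lap (\<lambda>y. A y tb) x
         + (cnj (fst (phi a)) * exp (- \<i> * of_real (a * t))) * cnj (lap (\<lambda>y. A y tb) x)"
    and "\<And>t. lap (\<lambda>y. snd (psi0 a A t y tb)) x
       = (snd (phi a) * exp (\<i> * of_real (a * t))) * lap (\<lambda>y. A y tb) x
         + (cnj (snd (phi a)) * exp (- \<i> * of_real (a * t))) * cnj (lap (\<lambda>y. A y tb) x)"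
proof -
  obtain f' where f1: "\<And>z. z \<in> UNIV \<times> T \<Longrightarrow> ((\<lambda>(x, s). A x s) has_derivative f' z) (at z)"
    and f2: "\<And>z v. z \<in> UNIV \<times> T \<Longrightarrow> (\<lambda>z. f' z v) differentiable (at z)"
    using smooth_facts[OF A_smooth] by blast
  have z: "(x, 0::real) + tb *\<^sub>R (0, 1) = (x, tb)" by simp
  have "(\<lambda>(x, s). A x s) differentiable (at ((x, 0::real) + tb *\<^sub>R (0, 1)))"
    unfolding z using f1[of "(x, tb)"] tbT differentiable_def by blast
  from line_diff[OF this] have "(\<lambda>s. A x s) differentiable (at tb)" by simp
  thus Ad: "((\<lambda>s. A x s) has_vector_derivative vector_derivative (\<lambda>s. A x s) (at tb)) (at tb)"
    by (simp add: vector_derivative_works)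
  have d1: "(\<lambda>h. A (y + h *\<^sub>R axis j 1) tb) differentiable (at 0)" for j y
  proof -
    have "(\<lambda>(x, s). A x s) differentiable (at ((y, tb) + 0 *\<^sub>R (axis j 1, 0::real)))"
      using f1[of "(y, tb)"] tbT differentiable_def by auto
    from line_diff[OF this] show ?thesis by simp
  qed
  have pdxA: "pdx j (\<lambda>y. A y tb) y = f' (y, tb) (axis j 1, 0)" for j y
  proof -
    have "((\<lambda>(x, s). A x s) has_derivative f' (y, tb)) (at ((y, tb) + 0 *\<^sub>R (axis j 1, 0::real)))"
      using f1[of "(y, tb)"] tbT by auto
    from line_deriv[OF this] have "((\<lambda>h. A (y + h *\<^sub>R axis j 1) tb) has_vector_derivative f' (y, tb) (axis j 1, 0)) (at 0)"
      by simp
    thus ?thesis unfolding pdx_def by (rule vector_derivative_at)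
  qed
  have d2: "(\<lambda>h. pdx j (\<lambda>y. A y tb) (x + h *\<^sub>R axis j 1)) differentiable (at 0)" for j
  proof -
    have "(\<lambda>z. f' z (axis j 1, 0)) differentiable (at ((x, tb) + 0 *\<^sub>R (axis j 1, 0::real)))"
      using f2[of "(x, tb)"] tbT by auto
    from line_diff[OF this] show ?thesis unfolding pdxA by simp
  qed
  fix t
  {
    fix p :: complex
    define al where "al = p * exp (\<i> * of_real (a * t))"
    define be where "be = cnj p * exp (- \<i> * of_real (a * t))"
    have "((\<lambda>s. al * A x s + be * cnj (A x s)) has_vector_derivative
        al * vector_derivative (\<lambda>s. A x s) (at tb) + be * cnj (vector_derivative (\<lambda>s. A x s) (at tb))) (at tb)"
      by (intro has_vector_derivative_add has_vector_derivative_mult_right has_vector_derivative_cnj Ad)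
    hence "vector_derivative (\<lambda>s. al * A x s + be * cnj (A x s)) (at tb)
      = al * vector_derivative (\<lambda>s. A x s) (at tb) + be * cnj (vector_derivative (\<lambda>s. A x s) (at tb))"
      by (rule vector_derivative_at)
    note this[unfolded al_def be_def]
    moreover have "lap (\<lambda>y. al * A y tb + be * cnj (A y tb)) x = al * lap (\<lambda>y. A y tb) x + be * cnj (lap (\<lambda>y. A y tb) x)"
      by (rule lap_lin[OF d1 d2])
    note this[unfolded al_def be_def]
    ultimately have "vector_derivative (\<lambda>s. p * exp (\<i> * of_real (a * t)) * A x s + cnj p * exp (- \<i> * of_real (a * t)) * cnj (A x s)) (at tb)
      = p * exp (\<i> * of_real (a * t)) * vector_derivative (\<lambda>s. A x s) (at tb) + cnj p * exp (- \<i> * of_real (a * t)) * cnj (vector_derivative (\<lambda>s. A x s) (at tb))"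
     "lap (\<lambda>y. p * exp (\<i> * of_real (a * t)) * A y tb + cnj p * exp (- \<i> * of_real (a * t)) * cnj (A y tb)) x
      = p * exp (\<i> * of_real (a * t)) * lap (\<lambda>y. A y tb) x + cnj p * exp (- \<i> * of_real (a * t)) * cnj (lap (\<lambda>y. A y tb) x)"
      by blast+
  } note gen = this
  have e1: "(\<lambda>s. fst (psi0 a A t x s)) = (\<lambda>s. fst (phi a) * exp (\<i> * of_real (a * t)) * A x s + cnj (fst (phi a)) * exp (- \<i> * of_real (a * t)) * cnj (A x s))"
    by (simp add: psi0_def fun_eq_iff mult_ac)
  have e2: "(\<lambda>s. snd (psi0 a A t x s)) = (\<lambda>s. snd (phi a) * exp (\<i> * of_real (a * t)) * A x s + cnj (snd (phi a)) * exp (- \<i> * of_real (a * t)) * cnj (A x s))"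
    by (simp add: psi0_def fun_eq_iff mult_ac)
  have e3: "(\<lambda>y. fst (psi0 a A t y tb)) = (\<lambda>y. fst (phi a) * exp (\<i> * of_real (a * t)) * A y tb + cnj (fst (phi a)) * exp (- \<i> * of_real (a * t)) * cnj (A y tb))"
    by (simp add: psi0_def fun_eq_iff mult_ac)
  have e4: "(\<lambda>y. snd (psi0 a A t y tb)) = (\<lambda>y. snd (phi a) * exp (\<i> * of_real (a * t)) * A y tb + cnj (snd (phi a)) * exp (- \<i> * of_real (a * t)) * cnj (A y tb))"
    by (simp add: psi0_def fun_eq_iff mult_ac)
  show "vector_derivative (\<lambda>s. fst (psi0 a A t x s)) (at tb)
       = (fst (phi a) * exp (\<i> * of_real (a * t))) * vector_derivative (\<lambda>s. A x s) (at tb)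
         + (cnj (fst (phi a)) * exp (- \<i> * of_real (a * t))) * cnj (vector_derivative (\<lambda>s. A x s) (at tb))"
    unfolding e1 by (rule gen(1))
  show "vector_derivative (\<lambda>s. snd (psi0 a A t x s)) (at tb)
       = (snd (phi a) * exp (\<i> * of_real (a * t))) * vector_derivative (\<lambda>s. A x s) (at tb)
         + (cnj (snd (phi a)) * exp (- \<i> * of_real (a * t))) * cnj (vector_derivative (\<lambda>s. A x s) (at tb))"
    unfolding e2 by (rule gen(1))
  show "lap (\<lambda>y. fst (psi0 a A t y tb)) x
       = (fst (phi a) * exp (\<i> * of_real (a * t))) * lap (\<lambda>y. A y tb) x
         + (cnj (fst (phi a)) * exp (- \<i> * of_real (a * t))) * cnj (lap (\<lambda>y. A y tb) x)"
    unfolding e3 by (rule gen(2))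
  show "lap (\<lambda>y. snd (psi0 a A t y tb)) x
       = (snd (phi a) * exp (\<i> * of_real (a * t))) * lap (\<lambda>y. A y tb) x
         + (cnj (snd (phi a)) * exp (- \<i> * of_real (a * t))) * cnj (lap (\<lambda>y. A y tb) x)"
    unfolding e4 by (rule gen(2))
qed

lemma exp_sq_int:
  "exp (- \<i> * of_real (of_int 2 * a * t)) = exp (- \<i> * of_real (a * t)) ^ 2"
proof -
  have "- \<i> * of_real (of_int 2 * a * t) = of_nat 2 * (- \<i> * of_real (a*t))" by simp
  thus ?thesis by (simp only: exp_of_nat_mult)
qed

lemma core:
  fixes a d1 d2 :: real and T :: "real set" and A :: "real^'n::finite \<Rightarrow> real \<Rightarrow> complex"
    and p1u p1v :: "real \<Rightarrow> real^'n \<Rightarrow> real \<Rightarrow> real" and r mub :: "real \<Rightarrow> real"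
    and x :: "real^'n" and tb :: real
  assumes a_pos: "a > 0"
    and A_smooth: "smooth_on (\<lambda>(x, s). A x s) (UNIV \<times> T)"
    and psi1_u: "\<And>x tb t. tb \<in> T \<Longrightarrow>
        ((\<lambda>s. complex_of_real (p1u s x tb)) has_vector_derivative
           (of_real (a\<^sup>2) * of_real (p1u t x tb) + of_real (a\<^sup>2) * of_real (p1v t x tb)
            + forc1 a (fst (psi0 a A t x tb)) (snd (psi0 a A t x tb)))) (at t)"
    and psi1_v: "\<And>x tb t. tb \<in> T \<Longrightarrow>
        ((\<lambda>s. complex_of_real (p1v s x tb)) has_vector_derivative
           (- of_real (1 + a\<^sup>2) * of_real (p1u t x tb) - of_real (a\<^sup>2) * of_real (p1v t x tb)
            - forc1 a (fst (psi0 a A t x tb)) (snd (psi0 a A t x tb)))) (at t)"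
    and psi1_per: "\<And>x tb t. tb \<in> T \<Longrightarrow>
        p1u (t + 2 * pi / a) x tb = p1u t x tb \<and> p1v (t + 2 * pi / a) x tb = p1v t x tb"
    and tbT: "tb \<in> T"
  shows "cdot (phistar a) (B21 a d1 d2 A r mub p1u p1v x tb)
     = c1 a d1 d2 * lap (\<lambda>y. A y tb) x + of_real (c2 a * mub tb - deriv r tb / r tb) * A x tb
       - c3 a * A x tb * of_real ((cmod (A x tb))\<^sup>2) - vector_derivative (\<lambda>s. A x s) (at tb)"
proof -
  note cd = core_deriv[OF A_smooth tbT]
  define P where "P = 2 * pi / a"
  define Pc where "Pc = complex_of_real P"
  define Pinv where "Pinv = complex_of_real (a / (2 * pi))"
  define E where "E t = exp (\<i> * of_real (a * t))" for t
  define em where "em t = exp (- \<i> * of_real (a * t))" for t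
  have ze: "\<And>t. exp (\<i> * of_real (a * t)) * exp (- \<i> * of_real (a * t)) = 1"
    by (simp flip: exp_add)
  define Av where "Av = A x tb"
  define cA where "cA = cnj Av"
  define Ad where "Ad = vector_derivative (\<lambda>s. A x s) (at tb)"
  define cAd where "cAd = cnj Ad"
  define L where "L = lap (\<lambda>y. A y tb) x"
  define cL where "cL = cnj L"
  define P1 where "P1 = fst (phi a)"
  define P2 where "P2 = snd (phi a)"
  define C1 where "C1 = cnj P1"
  define C2 where "C2 = cnj P2"
  define S1 where "S1 = fst (phistar a)"
  define S2 where "S2 = snd (phistar a)"
  define rr where "rr = complex_of_real (deriv r tb / r tb)"
  define mu where "mu = complex_of_real (mub tb)"
  define m where "m = complex_of_real ((1 + a\<^sup>2) * mub tb)"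
  define \<kappa> where "\<kappa> = complex_of_real (2 * (1 + a\<^sup>2) / a)"
  define \<delta> where "\<delta> = complex_of_real (2 * a)"
  define D1 where "D1 = complex_of_real d1"
  define D2 where "D2 = complex_of_real d2"
  define u where "u t = complex_of_real (p1u t x tb)" for t
  define v where "v t = complex_of_real (p1v t x tb)" for t
  define K0 where "K0 = - (S1*P1+S2*P2)*(Ad + rr*Av) + (D1*S1*P1 + D2*S2*P2)*L
           + (S1-S2)*(m*Av*P1 + (Av*P1)^2*(cA*C2) + 2*(Av*P1)*(cA*C1)*(Av*P2))"
  define K1 where "K1 = (S1-S2)*(Av*P1)^2*(Av*P2)"
  define K2 where "K2 = - (S1*C1+S2*C2)*(cAd + rr*cA) + (D1*S1*C1 + D2*S2*C2)*cL
           + (S1-S2)*(m*cA*C1 + 2*(Av*P1)*(cA*C1)*(cA*C2) + (cA*C1)^2*(Av*P2))"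
  define K3 where "K3 = (S1-S2)*(cA*C1)^2*(cA*C2)"
  define b0 where "b0 = (S1-S2)*(\<kappa>*Av*P1 + \<delta>*Av*P2)"
  define b2 where "b2 = (S1-S2)*(\<kappa>*cA*C1 + \<delta>*cA*C2)"
  define g0 where "g0 = (S1-S2)*\<delta>*Av*P1"
  define g2 where "g2 = (S1-S2)*\<delta>*cA*C1"
  have H: "(S1 * fst (B2 a d1 d2 A r mub p1u p1v t x tb) + S2 * snd (B2 a d1 d2 A r mub p1u p1v t x tb)) * em t
     = K0 + K1 * E t ^ 2 + K2 * em t ^ 2 + K3 * em t ^ 4 + u t * (b0 + b2 * em t ^ 2) + v t * (g0 + g2 * em t ^ 2)" for t
    apply (simp only: B2_def Let_def cd)
    apply (simp only: psi0_def nl2_def prod.sel)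
    unfolding K0_def K1_def K2_def K3_def b0_def b2_def g0_def g2_def E_def em_def u_def v_def
      Av_def cA_def Ad_def cAd_def L_def cL_def P1_def P2_def C1_def C2_def rr_def m_def \<kappa>_def \<delta>_def D1_def D2_def
    using ze[of t] by algebra
  define ac where "ac = complex_of_real a"
  define Pc where "Pc = complex_of_real (2 * pi / a)"
  define Fn where "Fn t = forc1 a (fst (psi0 a A t x tb)) (snd (psi0 a A t x tb))" for t
  define c where "c = complex_of_real ((1 + a\<^sup>2) / a)"
  define d where "d = complex_of_real (2 * a)"
  have u_eq: "u = (\<lambda>s. complex_of_real (p1u s x tb))" by (simp add: u_def fun_eq_iff)
  have v_eq: "v = (\<lambda>s. complex_of_real (p1v s x tb))" by (simp add: v_def fun_eq_iff)
  have dyu: "(u has_vector_derivative (ac^2 * u t + ac^2 * v t + 1 * Fn t)) (at t)" for t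
    using psi1_u[of tb x t, OF tbT] unfolding u_eq v_eq by (simp add: ac_def Fn_def)
  have dyv: "(v has_vector_derivative (- (1 + ac^2) * u t + - (ac^2) * v t + -1 * Fn t)) (at t)" for t
  proof -
    have "- of_real (1 + a\<^sup>2) * of_real (p1u t x tb) - of_real (a\<^sup>2) * of_real (p1v t x tb)
            - forc1 a (fst (psi0 a A t x tb)) (snd (psi0 a A t x tb)) = - (1 + ac^2) * u t + - (ac^2) * v t + -1 * Fn t"
      by (simp add: ac_def Fn_def u_def v_def)
    thus ?thesis using psi1_v[of tb x t, OF tbT] unfolding v_eq by simp
  qed
  have cu: "continuous_on UNIV u"
    using dyu by (meson continuous_at_imp_continuous_on has_vector_derivative_continuous)
  have cv: "continuous_on UNIV v"
    using dyv by (meson continuous_at_imp_continuous_on has_vector_derivative_continuous)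
  have cF: "continuous_on UNIV Fn"
    unfolding Fn_def[abs_def] forc1_def psi0_def by (intro continuous_intros)
  have peru: "u (2*pi/a) = u 0" using psi1_per[where x=x and t=0, OF tbT] by (simp add: u_def)
  have perv: "v (2*pi/a) = v 0" using psi1_per[where x=x and t=0, OF tbT] by (simp add: v_def)
  define Iu0 where "Iu0 = integral {0..2*pi/a} (\<lambda>t. u t * exp (- \<i> * of_real (of_int 0 * a * t)))"
  define Iv0 where "Iv0 = integral {0..2*pi/a} (\<lambda>t. v t * exp (- \<i> * of_real (of_int 0 * a * t)))"
  define IF0 where "IF0 = integral {0..2*pi/a} (\<lambda>t. Fn t * exp (- \<i> * of_real (of_int 0 * a * t)))"
  define Iu2 where "Iu2 = integral {0..2*pi/a} (\<lambda>t. u t * exp (- \<i> * of_real (of_int 2 * a * t)))"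
  define Iv2 where "Iv2 = integral {0..2*pi/a} (\<lambda>t. v t * exp (- \<i> * of_real (of_int 2 * a * t)))"
  define IF2 where "IF2 = integral {0..2*pi/a} (\<lambda>t. Fn t * exp (- \<i> * of_real (of_int 2 * a * t)))"
  have u0: "ac^2 * Iu0 + ac^2 * Iv0 + 1 * IF0 = \<i> * of_int 0 * ac * Iu0"
    unfolding Iu0_def Iv0_def IF0_def ac_def by (rule ode_int[OF a_pos dyu[unfolded ac_def] cu cv cF peru])
  have u2: "ac^2 * Iu2 + ac^2 * Iv2 + 1 * IF2 = \<i> * of_int 2 * ac * Iu2"
    unfolding Iu2_def Iv2_def IF2_def ac_def by (rule ode_int[OF a_pos dyu[unfolded ac_def] cu cv cF peru])
  have v0: "- (1 + ac^2) * Iu0 + - (ac^2) * Iv0 + -1 * IF0 = \<i> * of_int 0 * ac * Iv0"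
    unfolding Iu0_def Iv0_def IF0_def ac_def by (rule ode_int[OF a_pos dyv[unfolded ac_def] cu cv cF perv])
  have v2: "- (1 + ac^2) * Iu2 + - (ac^2) * Iv2 + -1 * IF2 = \<i> * of_int 2 * ac * Iv2"
    unfolding Iu2_def Iv2_def IF2_def ac_def by (rule ode_int[OF a_pos dyv[unfolded ac_def] cu cv cF perv])
  define F0c where "F0c = c*2*(Av*P1)*(cA*C1) + d*((Av*P1)*(cA*C2) + (cA*C1)*(Av*P2))"
  define F2c where "F2c = c*(Av*P1)^2 + d*(Av*P1)*(Av*P2)"
  define F0e where "F0e = c*(cA*C1)^2 + d*(cA*C1)*(cA*C2)"
  have ek0: "\<And>t. exp (- \<i> * of_real (of_int 0 * a * t)) = 1" by simp
  have F0pt: "Fn t * exp (- \<i> * of_real (of_int 0 * a * t))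
      = F0c + F2c * exp (\<i> * of_real (a*t))^2 + F0e * exp (- \<i> * of_real (a*t))^2 + 0 * exp (- \<i> * of_real (a*t))^4" for t
    unfolding ek0 Fn_def forc1_def psi0_def prod.sel F0c_def F2c_def F0e_def c_def d_def Av_def cA_def P1_def P2_def C1_def C2_def
    using ze[of t] by algebra
  have F2pt: "Fn t * exp (- \<i> * of_real (of_int 2 * a * t))
      = F2c + 0 * exp (\<i> * of_real (a*t))^2 + F0c * exp (- \<i> * of_real (a*t))^2 + F0e * exp (- \<i> * of_real (a*t))^4" for t
    unfolding exp_sq_int Fn_def forc1_def psi0_def prod.sel F0c_def F2c_def F0e_def c_def d_def Av_def cA_def P1_def P2_def C1_def C2_def
    using ze[of t] by algebra
  have IF0v: "IF0 = Pc * F0c"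
    unfolding IF0_def F0pt Pc_def by (rule integral_unique[OF trig_int[OF a_pos]])
  have IF2v: "IF2 = Pc * F2c"
    unfolding IF2_def F2pt Pc_def by (rule integral_unique[OF trig_int[OF a_pos]])
  have cu': "continuous_on UNIV (\<lambda>s. complex_of_real (p1u s x tb))" using cu unfolding u_eq .
  have cv': "continuous_on UNIV (\<lambda>s. complex_of_real (p1v s x tb))" using cv unfolding v_eq .
  have cem: "continuous_on UNIV em" unfolding em_def[abs_def] by (intro continuous_intros)
  have cB1: "continuous_on UNIV (\<lambda>t. fst (B2 a d1 d2 A r mub p1u p1v t x tb))"
    apply (simp only: B2_def Let_def cd)
    apply (simp only: psi0_def nl2_def prod.sel)
    by (intro cu' cv' continuous_intros)
  have cB2: "continuous_on UNIV (\<lambda>t. snd (B2 a d1 d2 A r mub p1u p1v t x tb))"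
    apply (simp only: B2_def Let_def cd)
    apply (simp only: psi0_def nl2_def prod.sel)
    by (intro cu' cv' continuous_intros)
  have intc: "\<And>g. continuous_on UNIV g \<Longrightarrow> (\<lambda>t. g t * em t) integrable_on {0..2*pi/a}"
  proof -
    fix g :: "real \<Rightarrow> complex" assume "continuous_on UNIV g"
    hence "continuous_on UNIV (\<lambda>t. g t * em t)" using cem by (rule continuous_on_mult)
    hence "continuous_on {0..2*pi/a} (\<lambda>t. g t * em t)" by (rule continuous_on_subset) simp
    thus "(\<lambda>t. g t * em t) integrable_on {0..2*pi/a}" by (rule integrable_continuous_interval)
  qed
  have i1: "(\<lambda>t. fst (B2 a d1 d2 A r mub p1u p1v t x tb) * em t) integrable_on {0..2*pi/a}" by (rule intc[OF cB1])
  have i2: "(\<lambda>t. snd (B2 a d1 d2 A r mub p1u p1v t x tb) * em t) integrable_on {0..2*pi/a}" by (rule intc[OF cB2])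
  have lin: "integral {0..2*pi/a} (\<lambda>t. (S1 * fst (B2 a d1 d2 A r mub p1u p1v t x tb) + S2 * snd (B2 a d1 d2 A r mub p1u p1v t x tb)) * em t)
     = S1 * integral {0..2*pi/a} (\<lambda>t. fst (B2 a d1 d2 A r mub p1u p1v t x tb) * em t)
       + S2 * integral {0..2*pi/a} (\<lambda>t. snd (B2 a d1 d2 A r mub p1u p1v t x tb) * em t)"
  proof -
    have "(\<lambda>t. (S1 * fst (B2 a d1 d2 A r mub p1u p1v t x tb) + S2 * snd (B2 a d1 d2 A r mub p1u p1v t x tb)) * em t)
      = (\<lambda>t. S1 * (fst (B2 a d1 d2 A r mub p1u p1v t x tb) * em t) + S2 * (snd (B2 a d1 d2 A r mub p1u p1v t x tb) * em t))"
      by (simp add: fun_eq_iff algebra_simps)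
    thus ?thesis
      by (simp only: integral_add integrable_on_mult_right i1 i2 integral_mult_right)
  qed
  have cdot_eq: "cdot (phistar a) (B21 a d1 d2 A r mub p1u p1v x tb)
     = Pinv * integral {0..2*pi/a} (\<lambda>t. (S1 * fst (B2 a d1 d2 A r mub p1u p1v t x tb) + S2 * snd (B2 a d1 d2 A r mub p1u p1v t x tb)) * em t)"
    unfolding lin unfolding cdot_def B21_def fourier1_def S1_def S2_def Pinv_def em_def prod.sel
    by (simp add: algebra_simps)
  have intw: "((\<lambda>t. w t * (\<beta>0 + \<beta>2 * em t ^ 2)) has_integral
      (\<beta>0 * integral {0..2*pi/a} (\<lambda>t. w t * exp (- \<i> * of_real (of_int 0 * a * t)))
       + \<beta>2 * integral {0..2*pi/a} (\<lambda>t. w t * exp (- \<i> * of_real (of_int 2 * a * t))))) {0..2*pi/a}"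
    if cw: "continuous_on UNIV w" for w \<beta>0 \<beta>2
  proof -
    have ce: "\<And>k::int. continuous_on UNIV (\<lambda>t. w t * exp (- \<i> * of_real (of_int k * a * t)))"
      by (intro continuous_intros cw)
    have ie: "\<And>k::int. (\<lambda>t. w t * exp (- \<i> * of_real (of_int k * a * t))) integrable_on {0..2*pi/a}"
      by (rule integrable_continuous_interval, rule continuous_on_subset[OF ce]) simp
    have "((\<lambda>t. \<beta>0 * (w t * exp (- \<i> * of_real (of_int 0 * a * t))) + \<beta>2 * (w t * exp (- \<i> * of_real (of_int 2 * a * t)))) has_integral
      (\<beta>0 * integral {0..2*pi/a} (\<lambda>t. w t * exp (- \<i> * of_real (of_int 0 * a * t)))
       + \<beta>2 * integral {0..2*pi/a} (\<lambda>t. w t * exp (- \<i> * of_real (of_int 2 * a * t))))) {0..2*pi/a}"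
      by (intro has_integral_add has_integral_mult_right integrable_integral ie)
    moreover have "(\<lambda>t. \<beta>0 * (w t * exp (- \<i> * of_real (of_int 0 * a * t))) + \<beta>2 * (w t * exp (- \<i> * of_real (of_int 2 * a * t))))
       = (\<lambda>t. w t * (\<beta>0 + \<beta>2 * em t ^ 2))"
      unfolding exp_sq_int ek0 em_def by (simp add: fun_eq_iff algebra_simps)
    ultimately show ?thesis by simp
  qed
  have ht: "((\<lambda>t. K0 + K1 * E t ^ 2 + K2 * em t ^ 2 + K3 * em t ^ 4) has_integral (Pc * K0)) {0..2*pi/a}"
    unfolding E_def em_def Pc_def by (rule trig_int[OF a_pos])
  have intH: "integral {0..2*pi/a} (\<lambda>t. (S1 * fst (B2 a d1 d2 A r mub p1u p1v t x tb) + S2 * snd (B2 a d1 d2 A r mub p1u p1v t x tb)) * em t)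
     = Pc * K0 + (b0 * Iu0 + b2 * Iu2) + (g0 * Iv0 + g2 * Iv2)"
    unfolding H Iu0_def Iu2_def Iv0_def Iv2_def
    by (rule integral_unique, intro has_integral_add ht intw cu cv)
  have a0: "ac \<noteq> 0" using a_pos by (simp add: ac_def)
  have P0: "Pinv * Pc = 1" using a_pos by (simp add: Pinv_def Pc_def flip: of_real_mult)
  have hP1: "P1 = 1" by (simp add: P1_def phi_def)
  have hP2: "P2 = -1 + \<i> / ac" by (simp add: P2_def phi_def ac_def)
  have hC1: "C1 = 1" by (simp add: C1_def hP1)
  have hC2: "C2 = -1 - \<i> / ac" by (simp add: C2_def hP2 ac_def)
  have hS1: "S1 = (1 - \<i> * ac) / 2" by (simp add: S1_def phistar_def ac_def)
  have hS2: "S2 = (- \<i> * ac) / 2" by (simp add: S2_def phistar_def ac_def)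
  have hc: "c = (1 + ac^2) / ac" by (simp add: c_def ac_def)
  have hd: "d = 2 * ac" by (simp add: d_def ac_def)
  have hk: "\<kappa> = 2 * (1 + ac^2) / ac" by (simp add: \<kappa>_def ac_def)
  have hdl: "\<delta> = 2 * ac" by (simp add: \<delta>_def ac_def)
  have hm: "m = (1 + ac^2) * mu" by (simp add: m_def mu_def ac_def)
  have hn: "complex_of_real ((cmod Av)\<^sup>2) = Av * cA" unfolding cA_def by (rule complex_norm_square)
  have hT1: "c1 a d1 d2 = (D1 + D2 - \<i> * (ac * (D1 - D2))) / 2" by (simp add: c1_def D1_def D2_def ac_def)
  have hT2: "complex_of_real (c2 a * mub tb - deriv r tb / r tb) = (1 + ac^2) / 2 * mu - rr"
    by (simp add: c2_def mu_def rr_def ac_def)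
  have hT3: "c3 a = ((2 + ac^2) / ac^2 + \<i> * ((4 - 7 * ac^2 + 4 * ac^4) / (3 * ac^3))) / 2"
    by (simp add: c3_def ac_def)
  have hIF0: "IF0 = Pc * (c*2*(Av*P1)*(cA*C1) + d*((Av*P1)*(cA*C2) + (cA*C1)*(Av*P2)))"
    using IF0v by (simp add: F0c_def)
  have hIF2: "IF2 = Pc * (c*(Av*P1)^2 + d*(Av*P1)*(Av*P2))"
    using IF2v by (simp add: F2c_def)
  note fin = alg_final[OF a0 P0 hP1 hP2 hC1 hC2 hS1 hS2 hc hd hk hdl hm hn hT1 hT2 hT3 hIF0 hIF2 u0 v0 u2 v2]
  have "cdot (phistar a) (B21 a d1 d2 A r mub p1u p1v x tb) = Pinv * (Pc * K0 + (b0 * Iu0 + b2 * Iu2) + (g0 * Iv0 + g2 * Iv2))"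
    unfolding cdot_eq intH ..
  also have "\<dots> = c1 a d1 d2 * L + complex_of_real (c2 a * mub tb - deriv r tb / r tb) * Av
     - c3 a * Av * complex_of_real ((cmod Av)\<^sup>2) - Ad"
    unfolding K0_def b0_def b2_def g0_def g2_def by (rule fin)
  finally show ?thesis unfolding L_def Av_def Ad_def .
qed

theorem theorem5p2:
  fixes a d1 d2 :: real
    and T :: "real set"
    and A :: "real^'n \<Rightarrow> real \<Rightarrow> complex"
    and p1u p1v :: "real \<Rightarrow> real^'n \<Rightarrow> real \<Rightarrow> real"
  assumes a_pos: "a > 0" and d1_pos: "d1 > 0" and d2_pos: "d2 > 0"
    and T_open: "open T" and T_int: "is_interval T"
    and A_smooth: "smooth_on (\<lambda>(x, s). A x s) (UNIV \<times> T)"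
    and psi1_u: "\<And>x tb t. tb \<in> T \<Longrightarrow>
        ((\<lambda>s. complex_of_real (p1u s x tb)) has_vector_derivative
           (of_real (a\<^sup>2) * of_real (p1u t x tb) + of_real (a\<^sup>2) * of_real (p1v t x tb)
            + forc1 a (fst (psi0 a A t x tb)) (snd (psi0 a A t x tb)))) (at t)"
    and psi1_v: "\<And>x tb t. tb \<in> T \<Longrightarrow>
        ((\<lambda>s. complex_of_real (p1v s x tb)) has_vector_derivative
           (- of_real (1 + a\<^sup>2) * of_real (p1u t x tb) - of_real (a\<^sup>2) * of_real (p1v t x tb)
            - forc1 a (fst (psi0 a A t x tb)) (snd (psi0 a A t x tb)))) (at t)"
    and psi1_per: "\<And>x tb t. tb \<in> T \<Longrightarrow>
        p1u (t + 2 * pi / a) x tb = p1u t x tb \<and> p1v (t + 2 * pi / a) x tb = p1v t x tb"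
  shows
    "(\<forall>r mub. (\<forall>tb\<in>T. r tb > 0 \<and> r differentiable (at tb)) \<longrightarrow>
        ((\<forall>x. \<forall>tb\<in>T. cdot (phistar a) (B21 a d1 d2 A r mub p1u p1v x tb) = 0) \<longleftrightarrow>
         (\<forall>x. \<forall>tb\<in>T. vector_derivative (\<lambda>s. A x s) (at tb) =
              c1 a d1 d2 * lap (\<lambda>y. A y tb) x
              + of_real (c2 a * mub tb - deriv r tb / r tb) * A x tb
              - c3 a * A x tb * of_real ((cmod (A x tb))\<^sup>2))))
   \<and>
    (\<forall>eps1 r1. 0 \<in> T \<and>
        (\<forall>t\<in>T. (eps1 has_real_derivative 2 * (eps1 t)\<^sup>2) (at t)) \<and>
        (\<forall>t\<in>T. r1 t > 0 \<and> (r1 has_real_derivative - (1/2) * r1 t * eps1 t) (at t)) \<longrightarrow>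
        (\<forall>t\<in>T. eps1 t = 2 * eps1 0 / (2 - 4 * eps1 0 * t)) \<and>
        ((\<forall>x. \<forall>tb\<in>T. cdot (phistar a) (B21 a d1 d2 A r1 (\<lambda>_. -1) p1u p1v x tb) = 0) \<longleftrightarrow>
         (\<forall>x. \<forall>t1\<in>T. vector_derivative (\<lambda>s. A x s) (at t1) =
              c1 a d1 d2 * lap (\<lambda>y. A y t1) x
              + of_real (- c2 a + eps1 t1 / 2) * A x t1
              - c3 a * A x t1 * of_real ((cmod (A x t1))\<^sup>2))))
   \<and>
    (\<forall>mu2 r2. 0 \<in> T \<and>
        (\<forall>t\<in>T. (mu2 has_real_derivative 1) (at t)) \<and>
        (\<forall>t\<in>T. r2 t > 0 \<and> (r2 has_real_derivative 0) (at t)) \<longrightarrow>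
        (\<forall>t\<in>T. mu2 t = mu2 0 + t) \<and>
        ((\<forall>x. \<forall>tb\<in>T. cdot (phistar a) (B21 a d1 d2 A r2 mu2 p1u p1v x tb) = 0) \<longleftrightarrow>
         (\<forall>x. \<forall>t2\<in>T. vector_derivative (\<lambda>s. A x s) (at t2) =
              c1 a d1 d2 * lap (\<lambda>y. A y t2) x
              + of_real (c2 a * mu2 t2) * A x t2
              - c3 a * A x t2 * of_real ((cmod (A x t2))\<^sup>2))))
   \<and>
    (\<forall>eps3 r3. 0 \<in> T \<and>
        (\<forall>t\<in>T. (eps3 has_real_derivative - 2 * (eps3 t)\<^sup>2) (at t)) \<and>
        (\<forall>t\<in>T. r3 t > 0 \<and> (r3 has_real_derivative (1/2) * r3 t * eps3 t) (at t)) \<longrightarrow>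
        (\<forall>t\<in>T. eps3 t = 2 * eps3 0 / (2 + 4 * eps3 0 * t)) \<and>
        ((\<forall>x. \<forall>tb\<in>T. cdot (phistar a) (B21 a d1 d2 A r3 (\<lambda>_. 1) p1u p1v x tb) = 0) \<longleftrightarrow>
         (\<forall>x. \<forall>t3\<in>T. vector_derivative (\<lambda>s. A x s) (at t3) =
              c1 a d1 d2 * lap (\<lambda>y. A y t3) x
              + of_real (c2 a - eps3 t3 / 2) * A x t3
              - c3 a * A x t3 * of_real ((cmod (A x t3))\<^sup>2))))"
proof -
  have key: "(cdot (phistar a) (B21 a d1 d2 A r mub p1u p1v x tb) = 0) \<longleftrightarrow>
     (vector_derivative (\<lambda>s. A x s) (at tb) = c1 a d1 d2 * lap (\<lambda>y. A y tb) x
        + of_real (c2 a * mub tb - deriv r tb / r tb) * A x tb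
        - c3 a * A x tb * of_real ((cmod (A x tb))\<^sup>2))" if tb: "tb \<in> T" for r mub x tb
  proof -
    have e: "cdot (phistar a) (B21 a d1 d2 A r mub p1u p1v x tb)
     = c1 a d1 d2 * lap (\<lambda>y. A y tb) x + of_real (c2 a * mub tb - deriv r tb / r tb) * A x tb
       - c3 a * A x tb * of_real ((cmod (A x tb))\<^sup>2) - vector_derivative (\<lambda>s. A x s) (at tb)"
      by (rule core[OF a_pos A_smooth psi1_u psi1_v psi1_per tb])
    show ?thesis unfolding e by auto
  qed
  have P1: "(\<forall>r mub. (\<forall>tb\<in>T. r tb > 0 \<and> r differentiable (at tb)) \<longrightarrow>
        ((\<forall>x. \<forall>tb\<in>T. cdot (phistar a) (B21 a d1 d2 A r mub p1u p1v x tb) = 0) \<longleftrightarrow>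
         (\<forall>x. \<forall>tb\<in>T. vector_derivative (\<lambda>s. A x s) (at tb) =
              c1 a d1 d2 * lap (\<lambda>y. A y tb) x
              + of_real (c2 a * mub tb - deriv r tb / r tb) * A x tb
              - c3 a * A x tb * of_real ((cmod (A x tb))\<^sup>2))))"
    using key by blast
  have P2: "(\<forall>eps1 r1. 0 \<in> T \<and>
        (\<forall>t\<in>T. (eps1 has_real_derivative 2 * (eps1 t)\<^sup>2) (at t)) \<and>
        (\<forall>t\<in>T. r1 t > 0 \<and> (r1 has_real_derivative - (1/2) * r1 t * eps1 t) (at t)) \<longrightarrow>
        (\<forall>t\<in>T. eps1 t = 2 * eps1 0 / (2 - 4 * eps1 0 * t)) \<and>
        ((\<forall>x. \<forall>tb\<in>T. cdot (phistar a) (B21 a d1 d2 A r1 (\<lambda>_. -1) p1u p1v x tb) = 0) \<longleftrightarrow>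
         (\<forall>x. \<forall>t1\<in>T. vector_derivative (\<lambda>s. A x s) (at t1) =
              c1 a d1 d2 * lap (\<lambda>y. A y t1) x
              + of_real (- c2 a + eps1 t1 / 2) * A x t1
              - c3 a * A x t1 * of_real ((cmod (A x t1))\<^sup>2))))"
  proof (intro allI impI)
    fix eps1 r1 :: "real \<Rightarrow> real"
    assume h: "0 \<in> T \<and>
        (\<forall>t\<in>T. (eps1 has_real_derivative 2 * (eps1 t)\<^sup>2) (at t)) \<and>
        (\<forall>t\<in>T. r1 t > 0 \<and> (r1 has_real_derivative - (1/2) * r1 t * eps1 t) (at t))"
    have sol: "\<forall>t\<in>T. eps1 t = 2 * eps1 0 / (2 - 4 * eps1 0 * t)"
    proof
      fix t assume t: "t \<in> T"
      have "eps1 t = eps1 0 / (1 - 2 * eps1 0 * t)"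
        by (rule riccati[OF T_int _ t]) (use h in auto)
      moreover have "2 * eps1 0 / (2 - 4 * eps1 0 * t) = eps1 0 / (1 - 2 * eps1 0 * t)"
      proof -
        have dd: "2 - 4 * eps1 0 * t = 2 * (1 - 2 * eps1 0 * t)" by simp
        show ?thesis by (subst dd, intro mult_divide_mult_cancel_left) simp
      qed
      ultimately show "eps1 t = 2 * eps1 0 / (2 - 4 * eps1 0 * t)" by simp
    qed
    have iff: "(cdot (phistar a) (B21 a d1 d2 A r1 (\<lambda>_. -1) p1u p1v x tb) = 0) \<longleftrightarrow>
         (vector_derivative (\<lambda>s. A x s) (at tb) =
              c1 a d1 d2 * lap (\<lambda>y. A y tb) x
              + of_real (- c2 a + eps1 tb / 2) * A x tb
              - c3 a * A x tb * of_real ((cmod (A x tb))\<^sup>2))" if tb: "tb \<in> T" for x tb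
    proof -
      have "(r1 has_real_derivative - (1/2) * r1 tb * eps1 tb) (at tb)" using h tb by blast
      hence dr: "deriv r1 tb = - (1/2) * r1 tb * eps1 tb" by (rule DERIV_imp_deriv)
      have rp: "r1 tb > 0" using h tb by blast
      have e: "c2 a * (\<lambda>_. -1) tb - deriv r1 tb / r1 tb = - c2 a + eps1 tb / 2"
        using rp by (simp add: dr)
      show ?thesis using key[OF tb, of r1 "\<lambda>_. -1" x] by (simp only: e)
    qed
    show "(\<forall>t\<in>T. eps1 t = 2 * eps1 0 / (2 - 4 * eps1 0 * t)) \<and>
        ((\<forall>x. \<forall>tb\<in>T. cdot (phistar a) (B21 a d1 d2 A r1 (\<lambda>_. -1) p1u p1v x tb) = 0) \<longleftrightarrow>
         (\<forall>x. \<forall>t1\<in>T. vector_derivative (\<lambda>s. A x s) (at t1) =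
              c1 a d1 d2 * lap (\<lambda>y. A y t1) x
              + of_real (- c2 a + eps1 t1 / 2) * A x t1
              - c3 a * A x t1 * of_real ((cmod (A x t1))\<^sup>2)))"
      using sol iff by blast
  qed
  have P3: "(\<forall>mu2 r2. 0 \<in> T \<and>
        (\<forall>t\<in>T. (mu2 has_real_derivative 1) (at t)) \<and>
        (\<forall>t\<in>T. r2 t > 0 \<and> (r2 has_real_derivative 0) (at t)) \<longrightarrow>
        (\<forall>t\<in>T. mu2 t = mu2 0 + t) \<and>
        ((\<forall>x. \<forall>tb\<in>T. cdot (phistar a) (B21 a d1 d2 A r2 mu2 p1u p1v x tb) = 0) \<longleftrightarrow>
         (\<forall>x. \<forall>t2\<in>T. vector_derivative (\<lambda>s. A x s) (at t2) =
              c1 a d1 d2 * lap (\<lambda>y. A y t2) x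
              + of_real (c2 a * mu2 t2) * A x t2
              - c3 a * A x t2 * of_real ((cmod (A x t2))\<^sup>2))))"
  proof (intro allI impI)
    fix mu2 r2 :: "real \<Rightarrow> real"
    assume h: "0 \<in> T \<and>
        (\<forall>t\<in>T. (mu2 has_real_derivative 1) (at t)) \<and>
        (\<forall>t\<in>T. r2 t > 0 \<and> (r2 has_real_derivative 0) (at t))"
    have sol: "\<forall>t\<in>T. mu2 t = mu2 0 + t"
    proof
      fix t assume t: "t \<in> T"
      have "(\<lambda>s. mu2 s - mu2 0 - s) t = 0"
      proof (rule lin_zero[OF T_int _ t, of _ "\<lambda>_. 0"])
        show "0 \<in> T" using h by blast
        fix s assume s: "s \<in> T"
        have "(mu2 has_real_derivative 1) (at s)" using h s by blast
        hence "((\<lambda>s. mu2 s - mu2 0 - s) has_real_derivative 1 - 0 - 1) (at s)"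
          by (intro derivative_intros)
        thus "((\<lambda>s. mu2 s - mu2 0 - s) has_real_derivative 0 * (mu2 s - mu2 0 - s)) (at s)" by simp
      qed (auto intro: continuous_intros)
      thus "mu2 t = mu2 0 + t" by simp
    qed
    have iff: "(cdot (phistar a) (B21 a d1 d2 A r2 mu2 p1u p1v x tb) = 0) \<longleftrightarrow>
         (vector_derivative (\<lambda>s. A x s) (at tb) =
              c1 a d1 d2 * lap (\<lambda>y. A y tb) x
              + of_real (c2 a * mu2 tb) * A x tb
              - c3 a * A x tb * of_real ((cmod (A x tb))\<^sup>2))" if tb: "tb \<in> T" for x tb
    proof -
      have "(r2 has_real_derivative 0) (at tb)" using h tb by blast
      hence dr: "deriv r2 tb = 0" by (rule DERIV_imp_deriv)
      have e: "c2 a * mu2 tb - deriv r2 tb / r2 tb = c2 a * mu2 tb" by (simp add: dr)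
      show ?thesis using key[OF tb, of r2 mu2 x] by (simp only: e)
    qed
    show "(\<forall>t\<in>T. mu2 t = mu2 0 + t) \<and>
        ((\<forall>x. \<forall>tb\<in>T. cdot (phistar a) (B21 a d1 d2 A r2 mu2 p1u p1v x tb) = 0) \<longleftrightarrow>
         (\<forall>x. \<forall>t2\<in>T. vector_derivative (\<lambda>s. A x s) (at t2) =
              c1 a d1 d2 * lap (\<lambda>y. A y t2) x
              + of_real (c2 a * mu2 t2) * A x t2
              - c3 a * A x t2 * of_real ((cmod (A x t2))\<^sup>2)))"
      using sol iff by blast
  qed
  have P4: "(\<forall>eps3 r3. 0 \<in> T \<and>
        (\<forall>t\<in>T. (eps3 has_real_derivative - 2 * (eps3 t)\<^sup>2) (at t)) \<and>
        (\<forall>t\<in>T. r3 t > 0 \<and> (r3 has_real_derivative (1/2) * r3 t * eps3 t) (at t)) \<longrightarrow>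
        (\<forall>t\<in>T. eps3 t = 2 * eps3 0 / (2 + 4 * eps3 0 * t)) \<and>
        ((\<forall>x. \<forall>tb\<in>T. cdot (phistar a) (B21 a d1 d2 A r3 (\<lambda>_. 1) p1u p1v x tb) = 0) \<longleftrightarrow>
         (\<forall>x. \<forall>t3\<in>T. vector_derivative (\<lambda>s. A x s) (at t3) =
              c1 a d1 d2 * lap (\<lambda>y. A y t3) x
              + of_real (c2 a - eps3 t3 / 2) * A x t3
              - c3 a * A x t3 * of_real ((cmod (A x t3))\<^sup>2))))"
  proof (intro allI impI)
    fix eps3 r3 :: "real \<Rightarrow> real"
    assume h: "0 \<in> T \<and>
        (\<forall>t\<in>T. (eps3 has_real_derivative - 2 * (eps3 t)\<^sup>2) (at t)) \<and>
        (\<forall>t\<in>T. r3 t > 0 \<and> (r3 has_real_derivative (1/2) * r3 t * eps3 t) (at t))"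
    have sol: "\<forall>t\<in>T. eps3 t = 2 * eps3 0 / (2 + 4 * eps3 0 * t)"
    proof
      fix t assume t: "t \<in> T"
      have "eps3 t = eps3 0 / (1 - (- 2) * eps3 0 * t)"
        by (rule riccati[OF T_int _ t]) (use h in auto)
      moreover have "2 * eps3 0 / (2 + 4 * eps3 0 * t) = eps3 0 / (1 - (- 2) * eps3 0 * t)"
      proof -
        have dd: "2 + 4 * eps3 0 * t = 2 * (1 - (- 2) * eps3 0 * t)" by simp
        show ?thesis by (subst dd, intro mult_divide_mult_cancel_left) simp
      qed
      ultimately show "eps3 t = 2 * eps3 0 / (2 + 4 * eps3 0 * t)" by simp
    qed
    have iff: "(cdot (phistar a) (B21 a d1 d2 A r3 (\<lambda>_. 1) p1u p1v x tb) = 0) \<longleftrightarrow>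
         (vector_derivative (\<lambda>s. A x s) (at tb) =
              c1 a d1 d2 * lap (\<lambda>y. A y tb) x
              + of_real (c2 a - eps3 tb / 2) * A x tb
              - c3 a * A x tb * of_real ((cmod (A x tb))\<^sup>2))" if tb: "tb \<in> T" for x tb
    proof -
      have "(r3 has_real_derivative (1/2) * r3 tb * eps3 tb) (at tb)" using h tb by blast
      hence dr: "deriv r3 tb = (1/2) * r3 tb * eps3 tb" by (rule DERIV_imp_deriv)
      have rp: "r3 tb > 0" using h tb by blast
      have e: "c2 a * (\<lambda>_. 1) tb - deriv r3 tb / r3 tb = c2 a - eps3 tb / 2"
        using rp by (simp add: dr)
      show ?thesis using key[OF tb, of r3 "\<lambda>_. 1" x] by (simp only: e)
    qed
    show "(\<forall>t\<in>T. eps3 t = 2 * eps3 0 / (2 + 4 * eps3 0 * t)) \<and>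
        ((\<forall>x. \<forall>tb\<in>T. cdot (phistar a) (B21 a d1 d2 A r3 (\<lambda>_. 1) p1u p1v x tb) = 0) \<longleftrightarrow>
         (\<forall>x. \<forall>t3\<in>T. vector_derivative (\<lambda>s. A x s) (at t3) =
              c1 a d1 d2 * lap (\<lambda>y. A y t3) x
              + of_real (c2 a - eps3 t3 / 2) * A x t3
              - c3 a * A x t3 * of_real ((cmod (A x t3))\<^sup>2)))"
      using sol iff by blast
  qed
  show ?thesis using P1 P2 P3 P4 by blast
qed

end
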